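(* Let $p\ge 3$ be a prime and write $\dfrac{(q^2;q^2)_\infty^2}{(q;q)_\infty(q^p;q^p)_\infty}=\sum_{n\ge0}a_nq^n$. Let $$N=N(p)=\max_s\ \min\Big\{\tfrac{r(r+1)}{2} : 0\le r\le p-1,\ \tfrac{r(r+1)}{2}\equiv s\pmod p\Big\}-p,$$ the maximum over residues $s\in\{0,\dots,p-1\}$ for which the set is nonempty. Then for all $n>N$: $a_n>0$ if $n\equiv \frac{r(r+1)}{2}\pmod p$ for some integer $r$, and $a_n=0$ otherwise.
   Context: For $|q|<1$, $(a;q)_\infty=\prod_{k\ge0}(1-aq^k)$. *)

theory Defs
  imports "HOL-Analysis.Analysis" "HOL-Number_Theory.Cong"
begin

definition qpoch_inf :: "complex \<Rightarrow> complex \<Rightarrow> complex" where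
  "qpoch_inf a q = (\<Prod>k. (1 - a * q ^ k))"

definition tri :: "nat \<Rightarrow> nat" where
  "tri r = r * (r + 1) div 2"

definition tri_res :: "nat \<Rightarrow> nat \<Rightarrow> nat set" where
  "tri_res p s = {tri r | r. r \<le> p - 1 \<and> [tri r = s] (mod p)}"

definition bigN :: "nat \<Rightarrow> int" where
  "bigN p = int (Max {Min (tri_res p s) | s. s \<le> p - 1 \<and> tri_res p s \<noteq> {}}) - int p"

end

theory Submission
  imports Defs
begin

lemma tri_0 [simp]: "tri 0 = 0" by (simp add: tri_def)
lemma tri_Suc: "tri (Suc r) = tri r + Suc r"
proof -
  have "Suc r * (Suc r + 1) = r * (r+1) + 2 * Suc r" by (simp add: algebra_simps)
  then show ?thesis unfolding tri_def by simp
qed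
lemma tri2: "2 * tri r = r * (r + 1)"
  by (induction r) (simp_all add: tri_Suc algebra_simps)
lemma tri_ge: "r \<le> tri r"
  by (induction r) (simp_all add: tri_Suc)
lemma tri_strict_mono: "strict_mono tri"
  by (rule strict_mono_Suc_iff[THEN iffD2]) (simp add: tri_Suc)

fun T :: "nat \<Rightarrow> nat" where
  "T 0 = 0" | "T (Suc j) = T j + j"

lemma T_tri: "T (Suc j) = tri j"
  by (induction j) (simp_all add: tri_Suc)

lemma T2: "2 * T k + k = k * k"
  by (induction k) (simp_all add: algebra_simps)

lemma expo1: "k \<le> n \<Longrightarrow> T k + T (Suc n) = tri (n - k) + n * k"
proof -
  assume "k \<le> n"
  then obtain d where n: "n = k + d" using le_Suc_ex by blast
  have a: "2 * T k + k = k * k" by (rule T2)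
  have b: "2 * T (Suc n) + Suc n = Suc n * Suc n" by (rule T2)
  have c: "2 * tri d = d * (d+1)" by (rule tri2)
  have "2 * (T k + T (Suc n)) = 2 * (tri d + n * k)"
    using a b c unfolding n by (simp add: algebra_simps)
  then show ?thesis using n by simp
qed

lemma expo2: "n < k \<Longrightarrow> T k + T (Suc n) = tri (k - Suc n) + n * k"
proof -
  assume "n < k"
  then obtain d where k: "k = Suc n + d" by (metis less_iff_Suc_add add_Suc)
  have a: "2 * T k + k = k * k" by (rule T2)
  have b: "2 * T (Suc n) + Suc n = Suc n * Suc n" by (rule T2)
  have c: "2 * tri d = d * (d+1)" by (rule tri2)
  have "2 * (T k + T (Suc n)) = 2 * (tri d + n * k)"
    using a b c unfolding k by (simp add: algebra_simps)
  then show ?thesis using k by simp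
qed

definition qp :: "nat \<Rightarrow> complex \<Rightarrow> complex" where
  "qp m q = (\<Prod>j<m. 1 - q * q ^ j)"

lemma qp_0 [simp]: "qp 0 q = 1" by (simp add: qp_def)
lemma qp_Suc: "qp (Suc m) q = qp m q * (1 - q * q ^ m)" by (simp add: qp_def)

fun qb :: "complex \<Rightarrow> nat \<Rightarrow> nat \<Rightarrow> complex" where
  "qb q m 0 = 1"
| "qb q 0 (Suc k) = 0"
| "qb q (Suc m) (Suc k) = qb q m (Suc k) + q ^ (m - k) * qb q m k"

lemma qb_gt: "m < k \<Longrightarrow> qb q m k = 0"
proof (induction m arbitrary: k)
  case 0 then show ?case by (cases k) auto
next
  case (Suc m) then show ?case by (cases k) auto
qed

lemma qb_ratio: "k \<le> m \<Longrightarrow> qb q m k * qp k q * qp (m - k) q = qp m q"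
proof (induction m arbitrary: k)
  case 0 then show ?case by simp
next
  case (Suc m k)
  show ?case
  proof (cases k)
    case 0 then show ?thesis by simp
  next
    case (Suc j)
    with Suc.prems have jm: "j \<le> m" by simp
    show ?thesis
    proof (cases "j = m")
      case True
      have "qb q m m * qp m q = qp m q" using Suc.IH[of m] by simp
      then show ?thesis using True Suc by (auto simp add: qb_gt qp_Suc)
    next
      case False
      then have jm': "Suc j \<le> m" using jm by simp
      have e1: "qb q m (Suc j) * qp (Suc j) q * qp (m - Suc j) q = qp m q" using Suc.IH[OF jm'] .
      have e2: "qb q m j * qp j q * qp (m - j) q = qp m q" using Suc.IH[OF jm] .
      have mj: "m - j = Suc (m - Suc j)" using jm' by simp
      define X where "X = qb q m (Suc j)"
      define Y where "Y = qb q m j"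
      define a where "a = qp j q"
      define b where "b = qp (m - Suc j) q"
      define u where "u = q ^ (m - j)"
      define v where "v = q * q ^ j"
      have qa: "qp (Suc j) q = a * (1 - v)" by (simp add: a_def v_def qp_Suc)
      have qb': "qp (m - j) q = b * (1 - u)" unfolding b_def u_def mj by (simp add: qp_Suc)
      have E1: "X * (a * (1 - v)) * b = qp m q" using e1 qa by (simp add: X_def b_def)
      have E2: "Y * a * (b * (1 - u)) = qp m q" using e2 qb' by (simp add: Y_def a_def)
      have "qb q (Suc m) k * qp k q * qp (Suc m - k) q
          = (X + u * Y) * qp (Suc j) q * qp (m - j) q"
        using Suc by (simp add: X_def Y_def u_def)
      also have "\<dots> = X * (a * (1 - v)) * (b * (1 - u)) + u * Y * (a * (1 - v)) * (b * (1 - u))"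
        unfolding qa qb' by (simp add: algebra_simps)
      also have "\<dots> = (1 - u) * (X * (a * (1 - v)) * b) + u * (1 - v) * (Y * a * (b * (1 - u)))"
        by (simp add: algebra_simps)
      also have "\<dots> = qp m q * (1 - u * v)" unfolding E1 E2 by (simp add: algebra_simps)
      also have "u * v = q * q ^ m"
        using jm by (simp add: u_def v_def flip: power_add power_Suc)
      finally show ?thesis by (simp add: qp_Suc)
    qed
  qed
qed

lemma qcauchy: "(\<Prod>i<m. 1 + z * q ^ i) = (\<Sum>k\<le>m. q ^ T k * qb q m k * z ^ k)"
proof (induction m)
  case 0 then show ?case by simp
next
  case (Suc m)
  let ?R = "\<lambda>k. q ^ T k * qb q m k * z ^ k"
  have "(\<Sum>k\<le>Suc m. q ^ T k * qb q (Suc m) k * z ^ k)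
      = 1 + (\<Sum>j\<le>m. q ^ T (Suc j) * (qb q m (Suc j) + q ^ (m - j) * qb q m j) * z ^ Suc j)"
    by (subst sum.atMost_Suc_shift) simp
  also have "\<dots> = 1 + (\<Sum>j\<le>m. ?R (Suc j)) + (\<Sum>j\<le>m. z * q ^ m * ?R j)"
  proof -
    have "q ^ T (Suc j) * (qb q m (Suc j) + q ^ (m - j) * qb q m j) * z ^ Suc j
        = ?R (Suc j) + z * q ^ m * ?R j" if "j \<le> m" for j
    proof -
      have "q ^ T (Suc j) * q ^ (m - j) = q ^ T j * q ^ m"
        using that by (simp flip: power_add)
      then show ?thesis by (simp add: algebra_simps)
    qed
    then show ?thesis by (simp add: sum.distrib add.assoc)
  qed
  also have "1 + (\<Sum>j\<le>m. ?R (Suc j)) = (\<Sum>k\<le>Suc m. ?R k)"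
    by (subst sum.atMost_Suc_shift) simp
  also have "\<dots> = (\<Sum>k\<le>m. ?R k)" by (simp add: qb_gt)
  finally show ?case using Suc.IH by (simp add: sum_distrib_left[symmetric] algebra_simps)
qed

lemma prod_split_add: fixes f :: "nat \<Rightarrow> 'a::comm_monoid_mult" and a b :: nat
  shows "(\<Prod>i<a+b. f i) = (\<Prod>i<a. f i) * (\<Prod>i<b. f (a + i))"
  by (induction b) (simp_all add: algebra_simps)

lemma sum_split_add: fixes f :: "nat \<Rightarrow> 'a::comm_monoid_add" and a b :: nat
  shows "(\<Sum>k\<le>a+b. f k) = (\<Sum>k\<le>a. f k) + (\<Sum>i<b. f (Suc a + i))"
  by (induction b) (simp_all add: algebra_simps)

lemma sum_rev_atMost: fixes n :: nat
  shows "(\<Sum>k\<le>n. f k) = (\<Sum>i\<le>n. f (n - i))"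
proof -
  have "(\<Sum>i<Suc n. f (Suc n - Suc i)) = (\<Sum>i<Suc n. f i)" by (rule sum.nat_diff_reindex)
  then show ?thesis by (simp add: lessThan_Suc_atMost)
qed

lemma Q_prod: "(q::complex) ^ T (Suc n) = (\<Prod>i<n. q ^ (n - i))"
proof (induction n)
  case 0 then show ?case by simp
next
  case (Suc n)
  have "(\<Prod>i<Suc n. q ^ (Suc n - i)) = q ^ Suc n * (\<Prod>i<n. q ^ (n - i))"
    by (simp only: prod.lessThan_Suc_shift diff_Suc_Suc diff_zero)
  moreover have "q ^ T (Suc (Suc n)) = q ^ Suc n * q ^ T (Suc n)"
    by (simp only: T.simps(2)[of "Suc n"] power_add mult.commute)
  ultimately show ?case using Suc.IH by (simp only:)
qed

lemma sym_id:
  fixes q :: complex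
  assumes q0: "q \<noteq> 0"
  shows "(\<Prod>i<n. 1 + q * q ^ i) * (\<Prod>i<n. 1 + q ^ i)
       = (\<Sum>i\<le>n. q ^ tri i * qb q (2*n) (n - i)) + (\<Sum>i<n. q ^ tri i * qb q (2*n) (Suc n + i))"
proof -
  define z where "z = inverse q ^ n"
  have zq: "z * q ^ n = 1" using q0 by (simp add: z_def power_inverse field_simps) 
  define Q where "Q = q ^ T (Suc n)"
  have C: "(\<Prod>i<n+n. 1 + z * q ^ i) = (\<Sum>k\<le>n+n. q ^ T k * qb q (n+n) k * z ^ k)"
    by (rule qcauchy)
  have L1: "(\<Prod>i<n+n. 1 + z * q ^ i) = (\<Prod>i<n. 1 + z * q ^ i) * (\<Prod>i<n. 1 + q ^ i)"
  proof -
    have "z * q ^ (n + i) = q ^ i" for i using zq by (simp add: power_add)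
    then show ?thesis by (simp add: prod_split_add)
  qed
  have L2: "Q * (\<Prod>i<n. 1 + z * q ^ i) = (\<Prod>i<n. 1 + q * q ^ i)"
  proof -
    have "Q * (\<Prod>i<n. 1 + z * q ^ i) = (\<Prod>i<n. q ^ (n - i) * (1 + z * q ^ i))"
    proof -
      have "Q = (\<Prod>i<n. q ^ (n - i))" by (simp only: Q_def Q_prod)
      then show ?thesis by (simp only: prod.distrib)
    qed
    also have "\<dots> = (\<Prod>i<n. 1 + q ^ (n - i))"
    proof (rule prod.cong)
      fix i assume "i \<in> {..<n}"
      then have "q ^ (n - i) * q ^ i = q ^ n" by (simp flip: power_add)
      then have "q ^ (n - i) * (z * q ^ i) = 1" using zq by (simp add: algebra_simps)
      then show "q ^ (n - i) * (1 + z * q ^ i) = 1 + q ^ (n - i)" by (simp add: algebra_simps)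
    qed simp
    also have "\<dots> = (\<Prod>i<n. 1 + q * q ^ (n - Suc i))"
      by (intro prod.cong refl) (simp add: Suc_diff_Suc flip: power_Suc)
    also have "\<dots> = (\<Prod>i<n. 1 + q * q ^ i)" by (rule prod.nat_diff_reindex)
    finally show ?thesis .
  qed
  define h where "h k = q ^ (if k \<le> n then tri (n - k) else tri (k - Suc n)) * qb q (n+n) k" for k
  have R1: "Q * (q ^ T k * qb q (n+n) k * z ^ k) = h k" for k
  proof -
    have zk: "z ^ k * q ^ (n * k) = 1" using zq by (simp add: power_mult power_mult_distrib[symmetric])
    have "Q * q ^ T k = q ^ (if k \<le> n then tri (n - k) else tri (k - Suc n)) * q ^ (n * k)"
    proof -
      have ex: "T (Suc n) + T k = (if k \<le> n then tri (n - k) else tri (k - Suc n)) + n * k"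
      proof (cases "k \<le> n")
        case True
        then show ?thesis using expo1[OF True] by (simp del: T.simps add: add.commute)
      next
        case False
        then have "n < k" by simp
        then show ?thesis using False expo2[of n k] by (simp del: T.simps add: add.commute)
      qed
      show ?thesis by (simp only: Q_def power_add[symmetric] ex)
    qed
    then have "Q * (q ^ T k * qb q (n+n) k * z ^ k)
       = q ^ (if k \<le> n then tri (n - k) else tri (k - Suc n)) * qb q (n+n) k * (z ^ k * q ^ (n * k))"
      by (simp add: algebra_simps)
    then show ?thesis unfolding h_def by (simp only: zk mult_1_right)
  qed
  have "Q * ((\<Prod>i<n. 1 + z * q ^ i) * (\<Prod>i<n. 1 + q ^ i))
        = (\<Sum>k\<le>n+n. h k)"
    using C L1 R1 by (simp add: sum_distrib_left flip: mult.assoc)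
  also have "\<dots> = (\<Sum>k\<le>n. h k) + (\<Sum>i<n. h (Suc n + i))" by (rule sum_split_add)
  also have "(\<Sum>k\<le>n. h k) = (\<Sum>i\<le>n. h (n - i))" by (rule sum_rev_atMost)
  also have "\<dots> = (\<Sum>i\<le>n. q ^ tri i * qb q (2*n) (n - i))"
    by (intro sum.cong refl) (auto simp: h_def mult_2)
  also have "(\<Sum>i<n. h (Suc n + i)) = (\<Sum>i<n. q ^ tri i * qb q (2*n) (Suc n + i))"
    by (intro sum.cong refl) (auto simp: h_def mult_2)
  finally show ?thesis using L2 by (simp add: mult.assoc[symmetric])
qed

lemma cprod_geom:
  fixes x c :: "'a::{real_normed_field,banach}"
  assumes "norm x < 1"
  shows "convergent_prod (\<lambda>k. 1 + c * x ^ k)"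
proof -
  have "summable (\<lambda>k. norm c * norm x ^ k)"
    using assms by (intro summable_mult summable_geometric) simp
  then have "summable (\<lambda>k. norm (1 + c * x ^ k - 1))"
    by (simp add: norm_mult norm_power)
  then show ?thesis
    by (intro abs_convergent_prod_imp_convergent_prod summable_imp_abs_convergent_prod)
qed

lemma cprod_geom':
  fixes x c :: "'a::{real_normed_field,banach}"
  assumes "norm x < 1"
  shows "convergent_prod (\<lambda>k. 1 - c * x ^ k)"
  using cprod_geom[OF assms, of "-c"] by simp

lemma qp_lim:
  assumes "norm q < 1"
  shows "(\<lambda>m. qp m q) \<longlonglongrightarrow> qpoch_inf q q"
proof -
  have "(\<lambda>n. \<Prod>i\<le>n. 1 - q * q ^ i) \<longlonglongrightarrow> qpoch_inf q q"
    unfolding qpoch_inf_def by (rule convergent_prod_LIMSEQ[OF cprod_geom'[OF assms]])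
  then have "(\<lambda>n. qp (Suc n) q) \<longlonglongrightarrow> qpoch_inf q q"
    by (simp add: qp_def lessThan_Suc_atMost)
  then show ?thesis by (rule filterlim_sequentially_Suc[THEN iffD1])
qed

lemma factor_nz:
  fixes q :: complex
  assumes "norm q < 1"
  shows "1 - q * q ^ j \<noteq> 0"
proof
  assume "1 - q * q ^ j = 0"
  then have "norm (q * q ^ j) = 1" by (metis eq_iff_diff_eq_0 norm_one)
  moreover have "norm (q * q ^ j) < 1"
  proof -
    have "norm q * norm q ^ j < 1"
      by (metis assms norm_ge_zero norm_power power_Suc power_less_one_iff zero_less_Suc)
    then show ?thesis by (simp add: norm_mult norm_power)
  qed
  ultimately show False by simp
qed

lemma qp_nz: "norm q < 1 \<Longrightarrow> qp m q \<noteq> 0"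
  unfolding qp_def using factor_nz by (simp add: prod_zero_iff)

lemma P_nz: "norm q < 1 \<Longrightarrow> qpoch_inf q q \<noteq> 0"
  unfolding qpoch_inf_def by (intro prodinf_nonzero cprod_geom' factor_nz) auto

lemma qp_lower:
  fixes q :: complex
  assumes r: "norm q < 1"
  shows "\<exists>Lo>0. \<forall>m. Lo \<le> norm (qp m q)"
proof -
  let ?r = "norm q"
  let ?f = "\<lambda>j. 1 - ?r * ?r ^ j"
  have f01: "0 < ?f j" "?f j \<le> 1" for j
  proof -
    have "?r * ?r ^ j < 1" using r
      by (metis norm_ge_zero norm_power power_Suc power_less_one_iff zero_less_Suc)
    then show "0 < ?f j" by simp
    show "?f j \<le> 1" by simp
  qed
  have cp: "convergent_prod ?f" using cprod_geom'[of ?r ?r] r by simp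
  have pos: "0 < prodinf ?f" by (rule less_0_prodinf[OF cp f01(1)])
  have "prodinf ?f \<le> norm (qp m q)" for m
  proof -
    have "prodinf ?f \<le> (\<Prod>j<m. ?f j)"
      by (rule prod_ge_prodinf) (use cp f01 in \<open>auto intro: less_imp_le\<close>)
    also have "\<dots> \<le> (\<Prod>j<m. norm (1 - q * q ^ j))"
    proof (rule prod_mono)
      fix j assume "j \<in> {..<m}"
      have "norm (1::complex) - norm (- (q * q ^ j)) \<le> norm (1 + - (q * q ^ j))"
        by (rule norm_diff_ineq)
      then show "0 \<le> ?f j \<and> ?f j \<le> norm (1 - q * q ^ j)"
        using f01[of j] by (simp add: norm_mult norm_power)
    qed
    also have "\<dots> = norm (qp m q)" by (simp add: qp_def prod_norm)
    finally show ?thesis .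
  qed
  then show ?thesis using pos by blast
qed

lemma qp_upper:
  fixes q :: complex
  assumes r: "norm q < 1"
  shows "\<exists>Up. \<forall>m. norm (qp m q) \<le> Up"
proof -
  let ?r = "norm q"
  let ?f = "\<lambda>j. 1 + ?r * ?r ^ j"
  have cp: "convergent_prod ?f" using cprod_geom[of ?r ?r] r by simp
  have "norm (qp m q) \<le> prodinf ?f" for m
  proof -
    have "norm (qp m q) = (\<Prod>j<m. norm (1 - q * q ^ j))" by (simp add: qp_def prod_norm)
    also have "\<dots> \<le> (\<Prod>j<m. ?f j)"
    proof (rule prod_mono)
      fix j assume "j \<in> {..<m}"
      show "0 \<le> norm (1 - q * q ^ j) \<and> norm (1 - q * q ^ j) \<le> ?f j"
        using norm_triangle_ineq4[of 1 "q * q ^ j"] by (simp add: norm_mult norm_power)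
    qed
    also have "\<dots> \<le> prodinf ?f"
      by (rule prod_le_prodinf) (use cp in auto)
    finally show ?thesis .
  qed
  then show ?thesis by blast
qed

lemma qb_bound:
  fixes q :: complex
  assumes r: "norm q < 1"
  shows "\<exists>C. \<forall>m k. k \<le> m \<longrightarrow> norm (qb q m k) \<le> C"
proof -
  obtain Lo where Lo: "Lo > 0" "\<And>m. Lo \<le> norm (qp m q)" using qp_lower[OF r] by blast
  obtain Up where Up: "\<And>m. norm (qp m q) \<le> Up" using qp_upper[OF r] by blast
  have "norm (qb q m k) \<le> Up / (Lo * Lo)" if "k \<le> m" for m k
  proof -
    have "qb q m k = qp m q / (qp k q * qp (m - k) q)"
      using qb_ratio[OF that, of q] qp_nz[OF r] by (simp add: field_simps)
    then have e: "norm (qb q m k) = norm (qp m q) / (norm (qp k q) * norm (qp (m - k) q))"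
      by (simp add: norm_divide norm_mult)
    have "0 \<le> Up" using Up[of 0] by simp
    then have "norm (qp m q) / (norm (qp k q) * norm (qp (m - k) q)) \<le> Up / (Lo * Lo)"
      by (intro frac_le mult_mono Up Lo mult_pos_pos) (use Lo in auto)
    then show ?thesis using e by simp
  qed
  then show ?thesis by blast
qed

definition psi :: "complex \<Rightarrow> complex" where
  "psi q = (\<Sum>n. q ^ tri n)"

lemma prod_lessThan_lim:
  fixes f :: "nat \<Rightarrow> 'a::{real_normed_field,banach}"
  assumes "convergent_prod f"
  shows "(\<lambda>n. \<Prod>i<n. f i) \<longlonglongrightarrow> prodinf f"
proof -
  have "(\<lambda>n. \<Prod>i\<le>n. f i) \<longlonglongrightarrow> prodinf f" by (rule convergent_prod_LIMSEQ[OF assms])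
  then have "(\<lambda>n. \<Prod>i<Suc n. f i) \<longlonglongrightarrow> prodinf f" by (simp add: lessThan_Suc_atMost)
  then show ?thesis by (rule filterlim_sequentially_Suc[THEN iffD1])
qed

lemma tri_summable:
  fixes r :: real
  assumes "0 \<le> r" "r < 1"
  shows "summable (\<lambda>i. C * r ^ tri i)"
proof -
  have "summable (\<lambda>i. \<bar>C\<bar> * r ^ i)" using assms by (intro summable_mult summable_geometric) simp
  moreover have "norm (C * r ^ tri i) \<le> \<bar>C\<bar> * r ^ i" for i
    using assms tri_ge[of i] by (simp add: abs_mult mult_left_mono power_decreasing)
  ultimately show ?thesis using summable_comparison_test'[of "\<lambda>i. \<bar>C\<bar> * r ^ i" 0 "\<lambda>i. C * r ^ tri i"] by blast
qed

lemma my_tannery: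
  fixes a :: "nat \<Rightarrow> nat \<Rightarrow> complex" and r :: real
  assumes "0 \<le> r" "r < 1"
    and bd: "\<And>i n. norm (a i n) \<le> C * r ^ tri i"
    and lim: "\<And>i. (\<lambda>n. a i n) \<longlonglongrightarrow> b i"
  shows "(\<lambda>n. suminf (\<lambda>i. a i n)) \<longlonglongrightarrow> suminf b"
proof -
  have "eventually (\<lambda>n. summable (\<lambda>k. norm (a k n))) sequentially \<and>
           summable (\<lambda>n. norm (b n)) \<and>
           ((\<lambda>n. suminf (\<lambda>k. a k n)) \<longlonglongrightarrow> suminf b)"
    by (rule tannerys_theorem[where M = "\<lambda>i. C * r ^ tri i"])
       (use assms tri_summable in \<open>auto intro: always_eventually\<close>)
  then show ?thesis by blast
qed

lemma qp_2n: "norm q < 1 \<Longrightarrow> (\<lambda>n. qp (2*n) q) \<longlonglongrightarrow> qpoch_inf q q"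
proof -
  assume r: "norm q < 1"
  have sm: "strict_mono (\<lambda>n::nat. 2*n)" by (auto simp: strict_mono_def)
  show ?thesis using LIMSEQ_subseq_LIMSEQ[OF qp_lim[OF r] sm] by (simp add: o_def)
qed

lemma qp_minus: "norm q < 1 \<Longrightarrow> (\<lambda>n. qp (n - i) q) \<longlonglongrightarrow> qpoch_inf q q"
  by (rule filterlim_compose[OF qp_lim filterlim_minus_const_nat_at_top])

lemma qp_plus: "norm q < 1 \<Longrightarrow> (\<lambda>n. qp (n + i) q) \<longlonglongrightarrow> qpoch_inf q q"
  by (rule LIMSEQ_ignore_initial_segment[OF qp_lim])

lemma lim1:
  assumes r: "norm q < 1"
  shows "(\<lambda>n. qb q (2*n) (n - i)) \<longlonglongrightarrow> 1 / qpoch_inf q q"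
proof -
  let ?P = "qpoch_inf q q"
  have ev: "eventually (\<lambda>n. qb q (2*n) (n - i) = qp (2*n) q / (qp (n - i) q * qp (n + i) q)) sequentially"
  proof (rule eventually_sequentiallyI[of i])
    fix n assume "i \<le> n"
    then have e: "2 * n - (n - i) = n + i" by simp
    have "qb q (2*n) (n - i) * qp (n - i) q * qp (n + i) q = qp (2*n) q"
      using qb_ratio[of "n - i" "2*n" q] e by simp
    then show "qb q (2*n) (n - i) = qp (2*n) q / (qp (n - i) q * qp (n + i) q)"
      using qp_nz[OF r] by (simp add: field_simps)
  qed
  have "(\<lambda>n. qp (2*n) q / (qp (n - i) q * qp (n + i) q)) \<longlonglongrightarrow> ?P / (?P * ?P)"
    by (intro tendsto_intros qp_2n qp_minus qp_plus r) (simp add: P_nz[OF r])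
  then have "(\<lambda>n. qb q (2*n) (n - i)) \<longlonglongrightarrow> ?P / (?P * ?P)"
    using tendsto_cong[OF ev] by blast
  then show ?thesis using P_nz[OF r] by simp
qed

lemma lim2:
  assumes r: "norm q < 1"
  shows "(\<lambda>n. qb q (2*n) (Suc n + i)) \<longlonglongrightarrow> 1 / qpoch_inf q q"
proof -
  let ?P = "qpoch_inf q q"
  have ev: "eventually (\<lambda>n. qb q (2*n) (Suc n + i) = qp (2*n) q / (qp (n + Suc i) q * qp (n - Suc i) q)) sequentially"
  proof (rule eventually_sequentiallyI[of "Suc i"])
    fix n assume "Suc i \<le> n"
    then have e: "2 * n - (Suc n + i) = n - Suc i" "Suc n + i \<le> 2 * n" by simp_all
    have "qb q (2*n) (Suc n + i) * qp (Suc n + i) q * qp (n - Suc i) q = qp (2*n) q"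
      using qb_ratio[OF e(2), of q] e(1) by simp
    then show "qb q (2*n) (Suc n + i) = qp (2*n) q / (qp (n + Suc i) q * qp (n - Suc i) q)"
      using qp_nz[OF r] by (simp add: field_simps)
  qed
  have "(\<lambda>n. qp (2*n) q / (qp (n + Suc i) q * qp (n - Suc i) q)) \<longlonglongrightarrow> ?P / (?P * ?P)"
    by (intro tendsto_intros qp_2n qp_minus qp_plus r) (simp add: P_nz[OF r])
  then have "(\<lambda>n. qb q (2*n) (Suc n + i)) \<longlonglongrightarrow> ?P / (?P * ?P)"
    using tendsto_cong[OF ev] by blast
  then show ?thesis using P_nz[OF r] by simp
qed

lemma gauss_core:
  fixes q :: complex
  assumes q0: "q \<noteq> 0" and r: "norm q < 1"
  shows "psi q = qpoch_inf q q * (\<Prod>k. 1 + q * q ^ k) ^ 2"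
proof -
  let ?P = "qpoch_inf q q"
  define A where "A = (\<Prod>k. 1 + q * q ^ k)"
  define B where "B = (\<Prod>k. 1 + q ^ k)"
  obtain C where C: "\<And>m k. k \<le> m \<Longrightarrow> norm (qb q m k) \<le> C" using qb_bound[OF r] by blast
  have C0: "0 \<le> C" using C[of 0 0] by simp
  have cA: "convergent_prod (\<lambda>k. 1 + q * q ^ k)" by (rule cprod_geom[OF r])
  have cB: "convergent_prod (\<lambda>k. 1 + q ^ k)" using cprod_geom[OF r, of 1] by simp
  have L: "(\<lambda>n. (\<Prod>i<n. 1 + q * q ^ i) * (\<Prod>i<n. 1 + q ^ i)) \<longlonglongrightarrow> A * B"
    unfolding A_def B_def by (intro tendsto_mult prod_lessThan_lim cA cB)
  define a1 where "a1 i n = (if i \<le> n then q ^ tri i * qb q (2*n) (n - i) else 0)" for i n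
  define a2 where "a2 i n = (if i < n then q ^ tri i * qb q (2*n) (Suc n + i) else 0)" for i n
  have s1: "suminf (\<lambda>i. a1 i n) = (\<Sum>i\<le>n. q ^ tri i * qb q (2*n) (n - i))" for n
    by (subst suminf_finite[of "{..n}"]) (auto simp: a1_def)
  have s2: "suminf (\<lambda>i. a2 i n) = (\<Sum>i<n. q ^ tri i * qb q (2*n) (Suc n + i))" for n
    by (subst suminf_finite[of "{..<n}"]) (auto simp: a2_def)
  have T1: "(\<lambda>n. suminf (\<lambda>i. a1 i n)) \<longlonglongrightarrow> (\<Sum>i. q ^ tri i * (1 / ?P))"
  proof (rule my_tannery[where r = "norm q" and C = C])
    fix i n
    show "norm (a1 i n) \<le> C * norm q ^ tri i"
    proof (cases "i \<le> n")
      case True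
      then have b: "norm (qb q (2*n) (n - i)) \<le> C" using C[of "n - i" "2*n"] by linarith
      have "norm q ^ tri i * norm (qb q (2*n) (n - i)) \<le> norm q ^ tri i * C"
        by (rule mult_left_mono[OF b]) simp
      moreover have "norm (a1 i n) = norm q ^ tri i * norm (qb q (2*n) (n - i))"
        using True by (simp add: a1_def norm_mult norm_power)
      ultimately show ?thesis by (simp only: mult.commute)
    next
      case False then show ?thesis using C0 by (simp add: a1_def)
    qed
  next
    fix i
    have l: "(\<lambda>n. q ^ tri i * qb q (2*n) (n - i)) \<longlonglongrightarrow> q ^ tri i * (1 / ?P)"
      by (intro tendsto_mult tendsto_const lim1 r)
    have ev: "eventually (\<lambda>n. a1 i n = q ^ tri i * qb q (2*n) (n - i)) sequentially"
      by (rule eventually_sequentiallyI[of i]) (simp add: a1_def)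
    show "(\<lambda>n. a1 i n) \<longlonglongrightarrow> q ^ tri i * (1 / ?P)"
      using tendsto_cong[OF ev] l by simp
  qed (use r in auto)
  have T2: "(\<lambda>n. suminf (\<lambda>i. a2 i n)) \<longlonglongrightarrow> (\<Sum>i. q ^ tri i * (1 / ?P))"
  proof (rule my_tannery[where r = "norm q" and C = C])
    fix i n
    show "norm (a2 i n) \<le> C * norm q ^ tri i"
    proof (cases "i < n")
      case True
      then have b: "norm (qb q (2*n) (Suc n + i)) \<le> C" using C[of "Suc n + i" "2*n"] by linarith
      have "norm q ^ tri i * norm (qb q (2*n) (Suc n + i)) \<le> norm q ^ tri i * C"
        by (rule mult_left_mono[OF b]) simp
      moreover have "norm (a2 i n) = norm q ^ tri i * norm (qb q (2*n) (Suc n + i))"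
        using True by (simp add: a2_def norm_mult norm_power)
      ultimately show ?thesis by (simp only: mult.commute)
    next
      case False then show ?thesis using C0 by (simp add: a2_def)
    qed
  next
    fix i
    have l: "(\<lambda>n. q ^ tri i * qb q (2*n) (Suc n + i)) \<longlonglongrightarrow> q ^ tri i * (1 / ?P)"
      by (intro tendsto_mult tendsto_const lim2 r)
    have ev: "eventually (\<lambda>n. a2 i n = q ^ tri i * qb q (2*n) (Suc n + i)) sequentially"
      by (rule eventually_sequentiallyI[of "Suc i"]) (simp add: a2_def)
    show "(\<lambda>n. a2 i n) \<longlonglongrightarrow> q ^ tri i * (1 / ?P)"
      using tendsto_cong[OF ev] l by simp
  qed (use r in auto)
  have summ: "summable (\<lambda>i. q ^ tri i)"
  proof (rule summable_norm_cancel, rule summable_comparison_test'[rotated])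
    show "summable (\<lambda>i. 1 * norm q ^ tri i)" by (rule tri_summable) (use r in auto)
  qed (simp add: norm_power)
  have sp: "(\<Sum>i. q ^ tri i * (1 / ?P)) = psi q / ?P"
    unfolding psi_def using suminf_mult2[OF summ, of "1 / ?P"] by simp
  have "(\<lambda>n. suminf (\<lambda>i. a1 i n) + suminf (\<lambda>i. a2 i n)) \<longlonglongrightarrow> psi q / ?P + psi q / ?P"
    using tendsto_add[OF T1 T2] unfolding sp .
  then have R: "(\<lambda>n. (\<Prod>i<n. 1 + q * q ^ i) * (\<Prod>i<n. 1 + q ^ i)) \<longlonglongrightarrow> psi q / ?P + psi q / ?P"
    unfolding s1 s2 sym_id[OF q0] .
  have AB: "A * B = psi q / ?P + psi q / ?P" using LIMSEQ_unique[OF L R] .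
  have "A = B / 2"
    unfolding A_def B_def using prodinf_split_head[OF cB] by simp
  then have B2: "B = 2 * A" by (simp add: mult.commute)
  have "A * A = (A * B) / 2" unfolding B2 by simp
  also have "\<dots> = psi q / ?P" unfolding AB by simp
  finally show ?thesis using P_nz[OF r] unfolding A_def by (simp add: field_simps power2_eq_square)
qed

lemma qpoch_sq:
  fixes q :: complex
  assumes r: "norm q < 1"
  shows "qpoch_inf (q^2) (q^2) = qpoch_inf q q * (\<Prod>k. 1 + q * q ^ k)"
proof -
  have "qpoch_inf q q * (\<Prod>k. 1 + q * q ^ k) = (\<Prod>k. (1 - q * q ^ k) * (1 + q * q ^ k))"
    unfolding qpoch_inf_def by (rule prodinf_mult[OF cprod_geom'[OF r] cprod_geom[OF r]])
  also have "\<dots> = (\<Prod>k. 1 - q^2 * (q^2) ^ k)"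
  proof (rule prodinf_cong)
    fix k
    have "(q^2) ^ k = q ^ k * q ^ k" by (simp add: power2_eq_square power_mult_distrib)
    then show "(1 - q * q ^ k) * (1 + q * q ^ k) = 1 - q^2 * (q^2) ^ k"
      by (simp add: algebra_simps power2_eq_square)
  qed
  finally show ?thesis unfolding qpoch_inf_def by simp
qed

lemma gauss:
  fixes q :: complex
  assumes q0: "q \<noteq> 0" and r: "norm q < 1"
  shows "qpoch_inf (q^2) (q^2) ^ 2 / qpoch_inf q q = psi q"
  using gauss_core[OF q0 r] qpoch_sq[OF r] P_nz[OF r] by (simp add: power2_eq_square field_simps)

fun cc :: "nat \<Rightarrow> nat \<Rightarrow> nat" where
  "cc 0 m = (if m = 0 then 1 else 0)"
| "cc (Suc M) m = (\<Sum>i\<le>m. cc M i * (if Suc M dvd (m - i) then 1 else 0))"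

lemma geom_dvd:
  fixes x :: "'a::{real_normed_field,banach}"
  assumes r: "norm x < 1"
  shows "(\<lambda>m. (if Suc M dvd m then 1 else 0) * x ^ m) sums inverse (1 - x * x ^ M)"
proof -
  have sm: "strict_mono (\<lambda>n. Suc M * n)" by (rule strict_monoI) (simp add: add_less_le_mono)
  have nx: "norm (x ^ Suc M) < 1"
    by (metis r norm_ge_zero norm_power power_less_one_iff zero_less_Suc)
  have "(\<lambda>n. (x ^ Suc M) ^ n) sums (1 / (1 - x ^ Suc M))" by (rule geometric_sums[OF nx])
  then have "(\<lambda>n. (if Suc M dvd (Suc M * n) then 1 else 0) * x ^ (Suc M * n)) sums inverse (1 - x * x ^ M)"
  proof -
    have e: "(\<lambda>n. (if Suc M dvd (Suc M * n) then 1 else 0) * x ^ (Suc M * n)) = (\<lambda>n. (x ^ Suc M) ^ n)"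
      by (rule ext) (simp only: dvd_triv_left if_True mult_1_left power_mult)
    have e2: "1 / (1 - x ^ Suc M) = inverse (1 - x * x ^ M)" by (simp add: divide_inverse)
    show ?thesis unfolding e e2[symmetric] by fact
  qed
  then show ?thesis
    by (subst (asm) sums_mono_reindex[OF sm, where f = "\<lambda>m. (if Suc M dvd m then 1 else 0) * x ^ m"]) auto
qed

lemma cc_step:
  fixes x :: "'a::{real_normed_field,banach}"
  assumes r: "norm x < 1"
    and s: "(\<lambda>m. of_nat (cc M m) * x ^ m) sums S"
    and n: "summable (\<lambda>m. norm (of_nat (cc M m) * x ^ m))"
  shows "(\<lambda>m. of_nat (cc (Suc M) m) * x ^ m) sums (S * inverse (1 - x * x ^ M))"
proof -
  let ?g = "\<lambda>m. (if Suc M dvd m then 1 else 0) * x ^ m"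
  have gs: "?g sums inverse (1 - x * x ^ M)" by (rule geom_dvd[OF r])
  have gn: "summable (\<lambda>m. norm (?g m))"
  proof (rule summable_comparison_test'[of "\<lambda>m. norm x ^ m" 0])
    show "summable (\<lambda>m. norm x ^ m)" using r by (intro summable_geometric) simp
  qed (simp add: norm_mult norm_power)
  have "(\<lambda>k. \<Sum>i\<le>k. (of_nat (cc M i) * x ^ i) * ?g (k - i)) sums
          ((\<Sum>k. of_nat (cc M k) * x ^ k) * (\<Sum>k. ?g k))"
    by (rule Cauchy_product_sums[OF n gn])
  moreover have "(\<Sum>k. of_nat (cc M k) * x ^ k) = S" using s by (simp add: sums_iff)
  moreover have "(\<Sum>k. ?g k) = inverse (1 - x * x ^ M)" using gs by (simp add: sums_iff)
  moreover have "(\<Sum>i\<le>k. (of_nat (cc M i) * x ^ i) * ?g (k - i)) = of_nat (cc (Suc M) k) * x ^ k" for k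
  proof -
    have "(\<Sum>i\<le>k. (of_nat (cc M i) * x ^ i) * ?g (k - i))
        = (\<Sum>i\<le>k. of_nat (cc M i * (if Suc M dvd (k - i) then 1 else 0)) * x ^ k)"
    proof (rule sum.cong[OF refl])
      fix i assume "i \<in> {..k}"
      then have "x ^ i * x ^ (k - i) = x ^ k" by (simp flip: power_add)
      then show "(of_nat (cc M i) * x ^ i) * ?g (k - i)
          = of_nat (cc M i * (if Suc M dvd (k - i) then 1 else 0)) * x ^ k"
        by (auto simp: algebra_simps)
    qed
    also have "\<dots> = of_nat (cc (Suc M) k) * x ^ k"
      by (simp only: cc.simps(2) of_nat_sum sum_distrib_right)
    finally show ?thesis .
  qed
  ultimately show ?thesis by simp
qed

lemma cc_base:
  "(\<lambda>m. of_nat (cc 0 m) * (x::'a::{real_normed_field,banach}) ^ m) sums 1"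
proof -
  have "(\<lambda>m. if m = 0 then (1::'a) else 0) sums 1" using sums_single[of 0 "\<lambda>_. 1::'a"] by simp
  then show ?thesis by (rule sums_cong[THEN iffD1, rotated]) simp
qed

lemma cc_sums_real:
  fixes x :: real
  assumes "norm x < 1"
  shows "(\<lambda>m. of_nat (cc M m) * x ^ m) sums inverse (\<Prod>k<M. 1 - x * x ^ k)"
  using assms
proof (induction M arbitrary: x)
  case 0 then show ?case using cc_base by simp
next
  case (Suc M)
  have n: "summable (\<lambda>m. norm (of_nat (cc M m) * x ^ m))"
  proof -
    have "(\<lambda>m. of_nat (cc M m) * \<bar>x\<bar> ^ m) sums inverse (\<Prod>k<M. 1 - \<bar>x\<bar> * \<bar>x\<bar> ^ k)"
      using Suc by simp
    then show ?thesis by (simp add: sums_iff abs_mult power_abs)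
  qed
  show ?case using cc_step[OF Suc.prems Suc.IH[OF Suc.prems] n]
    by (simp add: mult.commute)
qed

lemma cc_sums:
  fixes x :: complex
  assumes "norm x < 1"
  shows "(\<lambda>m. of_nat (cc M m) * x ^ m) sums inverse (\<Prod>k<M. 1 - x * x ^ k)"
  using assms
proof (induction M)
  case 0 then show ?case using cc_base by simp
next
  case (Suc M)
  have n: "summable (\<lambda>m. norm (of_nat (cc M m) * x ^ m))"
  proof -
    have "(\<lambda>m. of_nat (cc M m) * norm x ^ m) sums inverse (\<Prod>k<M. 1 - norm x * norm x ^ k)"
      using cc_sums_real[of "norm x" M] Suc.prems by simp
    then show ?thesis by (simp add: sums_iff norm_mult norm_power)
  qed
  show ?case using cc_step[OF Suc.prems Suc.IH[OF Suc.prems] n]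
    by (simp add: mult.commute)
qed

lemma cc_mono_Suc: "cc M m \<le> cc (Suc M) m"
proof -
  have "cc M m * (if Suc M dvd (m - m) then 1 else 0) \<le> cc (Suc M) m"
    unfolding cc.simps(2) by (rule member_le_sum[of m "{..m}"]) auto
  then show ?thesis by simp
qed

lemma cc_mono: "M \<le> M' \<Longrightarrow> cc M m \<le> cc M' m"
proof (induction M' rule: dec_induct)
  case base then show ?case by simp
next
  case (step n) then show ?case using cc_mono_Suc[of n m] by linarith
qed

lemma cc_stable_Suc:
  assumes "m \<le> M"
  shows "cc (Suc M) m = cc M m"
proof -
  have "cc (Suc M) m = (\<Sum>i\<in>{m}. cc M i * (if Suc M dvd (m - i) then 1 else 0))"
    unfolding cc.simps(2)
  proof (rule sum.mono_neutral_right)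
    show "\<forall>i\<in>{..m} - {m}. cc M i * (if Suc M dvd (m - i) then 1 else 0) = 0"
    proof
      fix i assume i: "i \<in> {..m} - {m}"
      then have "0 < m - i" "m - i < Suc M" using assms by auto
      then have "\<not> Suc M dvd (m - i)" using nat_dvd_not_less by blast
      then show "cc M i * (if Suc M dvd (m - i) then 1 else 0) = 0" by simp
    qed
  qed auto
  then show ?thesis by simp
qed

lemma cc_stable: "m \<le> M \<Longrightarrow> cc M m = cc m m"
proof (induction M rule: dec_induct)
  case base then show ?case by simp
next
  case (step n) then show ?case using cc_stable_Suc[of m n] by linarith
qed

lemma cc_one: "cc (Suc 0) m = 1"
proof -
  have "cc (Suc 0) m = (\<Sum>i\<in>{0}. cc 0 i * (if Suc 0 dvd (m - i) then 1 else 0))"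
    unfolding cc.simps(2) by (rule sum.mono_neutral_right) auto
  then show ?thesis by simp
qed

definition pc :: "nat \<Rightarrow> nat" where "pc m = cc m m"

lemma pc_pos: "1 \<le> pc m"
proof (cases m)
  case 0 then show ?thesis by (simp add: pc_def)
next
  case (Suc k)
  then have "cc (Suc 0) m \<le> cc m m" by (intro cc_mono) simp
  then show ?thesis by (simp add: pc_def cc_one)
qed

lemma cc_le_pc: "cc M m \<le> pc m"
proof (cases "M \<le> m")
  case True then show ?thesis unfolding pc_def by (rule cc_mono)
next
  case False then show ?thesis unfolding pc_def using cc_stable[of m M] by simp
qed

lemma pc_summable:
  fixes r :: real
  assumes r: "0 \<le> r" "r < 1"
  shows "summable (\<lambda>m. real (pc m) * r ^ m)"
proof -
  let ?f = "\<lambda>j. 1 - r * r ^ j"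
  have f01: "0 < ?f j" "?f j \<le> 1" for j
  proof -
    have "r * r ^ j < 1" using r
      by (metis power_Suc power_less_one_iff zero_less_Suc)
    then show "0 < ?f j" by simp
    show "?f j \<le> 1" using r by simp
  qed
  have cp: "convergent_prod ?f" using cprod_geom'[of r r] r by simp
  have pos: "0 < prodinf ?f" by (rule less_0_prodinf[OF cp f01(1)])
  show ?thesis
  proof (rule bounded_imp_summable)
    fix n
    have "(\<Sum>k\<le>n. real (pc k) * r ^ k) = (\<Sum>k\<le>n. real (cc n k) * r ^ k)"
      by (intro sum.cong refl) (simp add: pc_def cc_stable[of _ n])
    also have "\<dots> \<le> (\<Sum>k. real (cc n k) * r ^ k)"
    proof (rule sum_le_suminf)
      show "summable (\<lambda>k. real (cc n k) * r ^ k)"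
        using cc_sums_real[of r n] r by (simp add: sums_iff)
    qed (use r in simp_all)
    also have "\<dots> = inverse (\<Prod>k<n. ?f k)"
      using cc_sums_real[of r n] r by (simp add: sums_iff)
    also have "\<dots> \<le> inverse (prodinf ?f)"
    proof -
      have "prodinf ?f \<le> (\<Prod>k<n. ?f k)"
        by (rule prod_ge_prodinf) (use cp f01 in \<open>auto intro: less_imp_le\<close>)
      then show ?thesis using pos by (rule le_imp_inverse_le)
    qed
    finally show "(\<Sum>k\<le>n. real (pc k) * r ^ k) \<le> inverse (prodinf ?f)" .
  next
    fix n show "0 \<le> real (pc n) * r ^ n" using r by simp
  qed
qed

lemma part_gf:
  fixes x :: complex
  assumes r: "norm x < 1"
  shows "(\<lambda>m. of_nat (pc m) * x ^ m) sums inverse (qpoch_inf x x)"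
proof -
  have ps: "summable (\<lambda>m. real (pc m) * norm x ^ m)" by (rule pc_summable) (use r in auto)
  have T: "eventually (\<lambda>n. summable (\<lambda>k. norm (of_nat (cc n k) * x ^ k))) sequentially \<and>
           summable (\<lambda>n. norm (of_nat (pc n) * x ^ n)) \<and>
           ((\<lambda>n. suminf (\<lambda>k. of_nat (cc n k) * x ^ k)) \<longlonglongrightarrow> suminf (\<lambda>k. of_nat (pc k) * x ^ k))"
  proof (rule tannerys_theorem[where M = "\<lambda>m. real (pc m) * norm x ^ m"])
    fix k
    have ev: "eventually (\<lambda>n. of_nat (cc n k) * x ^ k = of_nat (pc k) * x ^ k) sequentially"
      by (rule eventually_sequentiallyI[of k]) (metis pc_def cc_stable)
    show "(\<lambda>n. of_nat (cc n k) * x ^ k) \<longlonglongrightarrow> of_nat (pc k) * x ^ k"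
      by (subst tendsto_cong[OF ev]) simp
  next
    show "eventually (\<lambda>(k, n). norm (of_nat (cc n k) * x ^ k) \<le> real (pc k) * norm x ^ k)
            (at_top \<times>\<^sub>F sequentially)"
    proof (intro always_eventually allI, clarify)
      fix k n
      have "real (cc n k) \<le> real (pc k)" using cc_le_pc[of n k] by simp
      then have "real (cc n k) * norm x ^ k \<le> real (pc k) * norm x ^ k"
        by (rule mult_right_mono) simp
      then show "norm (of_nat (cc n k) * x ^ k) \<le> real (pc k) * norm x ^ k"
        by (simp add: norm_mult norm_power)
    qed
  next
    show "summable (\<lambda>m. real (pc m) * norm x ^ m)" by (rule ps)
  qed simp
  have L1: "(\<lambda>n. suminf (\<lambda>k. of_nat (cc n k) * x ^ k)) \<longlonglongrightarrow> inverse (qpoch_inf x x)"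
  proof -
    have "(\<lambda>n. inverse (qp n x)) \<longlonglongrightarrow> inverse (qpoch_inf x x)"
      by (rule tendsto_inverse[OF qp_lim[OF r] P_nz[OF r]])
    moreover have "suminf (\<lambda>k. of_nat (cc n k) * x ^ k) = inverse (qp n x)" for n
      using cc_sums[OF r, of n] unfolding qp_def by (simp add: sums_iff)
    ultimately show ?thesis by (simp only:)
  qed
  have "suminf (\<lambda>k. of_nat (pc k) * x ^ k) = inverse (qpoch_inf x x)"
    by (rule LIMSEQ_unique[OF conjunct2[OF conjunct2[OF T]] L1])
  moreover have "summable (\<lambda>k. of_nat (pc k) * x ^ k)"
    by (rule summable_norm_cancel[OF conjunct1[OF conjunct2[OF T]]])
  ultimately show ?thesis by (simp add: sums_iff)
qed

lemma psi_summable: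
  fixes q :: complex
  assumes r: "norm q < 1"
  shows "summable (\<lambda>i. q ^ tri i)"
proof (rule summable_norm_cancel, rule summable_comparison_test'[rotated])
  show "summable (\<lambda>i. 1 * norm q ^ tri i)" by (rule tri_summable) (use r in auto)
qed (simp add: norm_power)

lemma powser_uniq:
  fixes a b :: "nat \<Rightarrow> complex"
  assumes A: "\<And>x. x \<noteq> 0 \<Longrightarrow> norm x < 1 \<Longrightarrow> (\<lambda>n. a n * x ^ n) sums f x"
    and B: "\<And>x. x \<noteq> 0 \<Longrightarrow> norm x < 1 \<Longrightarrow> (\<lambda>n. b n * x ^ n) sums f x"
  shows "a n = b n"
proof -
  define d where "d n = a n - b n" for n
  have D: "(\<lambda>n. d n * x ^ n) sums 0" if "x \<noteq> 0" "norm x < 1" for x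
    using sums_diff[OF A[OF that] B[OF that]] by (simp add: d_def algebra_simps)
  have "d k = 0" for k
  proof (induction k rule: less_induct)
    case (less k)
    have S: "(\<lambda>i. d (i + k) * x ^ i) sums 0" if x: "x \<noteq> 0" "norm x < 1" for x
    proof -
      have "(\<lambda>i. d (i + k) * x ^ (i + k)) sums 0"
        using sums_zero_iff_shift[of k "\<lambda>i. d i * x ^ i" 0] less.IH D[OF x] by simp
      then have "(\<lambda>i. d (i + k) * x ^ (i + k) / x ^ k) sums (0 / x ^ k)" by (rule sums_divide)
      moreover have "d (i + k) * x ^ (i + k) / x ^ k = d (i + k) * x ^ i" for i
        using x by (simp add: power_add)
      ultimately show ?thesis by simp
    qed
    have "((\<lambda>x::complex. 0) \<longlongrightarrow> d (0 + k)) (at (0::complex))"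
      by (rule powser_limit_0_strong[of 1 "\<lambda>i. d (i + k)" "\<lambda>x. 0"]) (use S in auto)
    then show "d k = 0" using LIM_unique[OF _ tendsto_const] by simp
  qed
  then show ?thesis by (simp add: d_def)
qed

definition bn :: "nat \<Rightarrow> nat \<Rightarrow> nat" where
  "bn p n = (\<Sum>i\<le>n. (if i \<in> range tri then 1 else 0) * (if p dvd (n - i) then pc ((n - i) div p) else 0))"

lemma series:
  fixes q :: complex and p :: nat
  assumes p: "0 < p" and q0: "q \<noteq> 0" and r: "norm q < 1"
  shows "(\<lambda>n. of_nat (bn p n) * q ^ n) sums
           (qpoch_inf (q^2) (q^2) ^ 2 / (qpoch_inf q q * qpoch_inf (q^p) (q^p)))"
proof -
  define t where "t i = (if i \<in> range tri then 1 else 0) * q ^ i" for i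
  define d where "d n = (if p dvd n then of_nat (pc (n div p)) else 0) * q ^ n" for n
  have ts: "t sums psi q"
  proof -
    have "(\<lambda>n. q ^ tri n) sums psi q"
      using psi_summable[OF r] unfolding psi_def by (simp add: summable_sums)
    then have "(\<lambda>n. t (tri n)) sums psi q" by (simp add: t_def)
    then show ?thesis by (subst (asm) sums_mono_reindex[OF tri_strict_mono]) (auto simp: t_def)
  qed
  have rq: "norm (q ^ p) < 1"
    using r p by (simp add: norm_power power_less_one_iff)
  have sm: "strict_mono (\<lambda>m. p * m)" using p by (intro strict_monoI) simp
  have zero: "n \<notin> range (\<lambda>m. p * m) \<Longrightarrow> \<not> p dvd n" for n by (auto elim!: dvdE)
  have ds: "d sums inverse (qpoch_inf (q^p) (q^p))"
  proof -
    have "(\<lambda>m. of_nat (pc m) * (q^p) ^ m) sums inverse (qpoch_inf (q^p) (q^p))"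
      by (rule part_gf[OF rq])
    moreover have "d (p * m) = of_nat (pc m) * (q^p) ^ m" for m
      using p by (simp add: d_def power_mult)
    ultimately have "(\<lambda>m. d (p * m)) sums inverse (qpoch_inf (q^p) (q^p))" by simp
    then show ?thesis by (subst (asm) sums_mono_reindex[OF sm]) (auto simp: d_def dest: zero)
  qed
  have tn: "summable (\<lambda>i. norm (t i))"
  proof (rule summable_comparison_test'[of "\<lambda>i. norm q ^ i" 0])
    show "summable (\<lambda>i. norm q ^ i)" using r by (intro summable_geometric) simp
  qed (simp add: t_def norm_mult norm_power)
  have dn: "summable (\<lambda>n. norm (d n))"
  proof -
    define h where "h n = (if p dvd n then real (pc (n div p)) else 0) * norm q ^ n" for n
    have "summable (\<lambda>m. real (pc m) * (norm q ^ p) ^ m)"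
      by (rule pc_summable) (use rq in \<open>auto simp: norm_power\<close>)
    moreover have "h (p * m) = real (pc m) * (norm q ^ p) ^ m" for m
      using p by (simp add: h_def power_mult)
    ultimately have "(\<lambda>m. h (p * m)) sums (\<Sum>m. real (pc m) * (norm q ^ p) ^ m)"
      by (simp add: summable_sums)
    then have "h sums (\<Sum>m. real (pc m) * (norm q ^ p) ^ m)"
      by (subst (asm) sums_mono_reindex[OF sm]) (auto simp: h_def dest: zero)
    moreover have "norm (d n) = h n" for n by (simp add: d_def h_def norm_mult norm_power)
    ultimately show ?thesis by (simp add: sums_iff)
  qed
  have C: "(\<lambda>k. \<Sum>i\<le>k. t i * d (k - i)) sums ((\<Sum>k. t k) * (\<Sum>k. d k))"
    by (rule Cauchy_product_sums[OF tn dn])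
  have tm: "(\<Sum>i\<le>k. t i * d (k - i)) = of_nat (bn p k) * q ^ k" for k
  proof -
    have "(\<Sum>i\<le>k. t i * d (k - i)) = (\<Sum>i\<le>k. of_nat ((if i \<in> range tri then 1 else 0) *
            (if p dvd (k - i) then pc ((k - i) div p) else 0)) * q ^ k)"
    proof (rule sum.cong[OF refl])
      fix i assume "i \<in> {..k}"
      then have "q ^ i * q ^ (k - i) = q ^ k" by (simp flip: power_add)
      then show "t i * d (k - i) = of_nat ((if i \<in> range tri then 1 else 0) *
            (if p dvd (k - i) then pc ((k - i) div p) else 0)) * q ^ k"
        by (auto simp: t_def d_def algebra_simps)
    qed
    also have "\<dots> = of_nat (bn p k) * q ^ k"
      by (simp only: bn_def of_nat_sum sum_distrib_right)
    finally show ?thesis .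
  qed
  have "(\<Sum>k. t k) * (\<Sum>k. d k) = psi q * inverse (qpoch_inf (q^p) (q^p))"
    using ts ds by (simp add: sums_iff)
  also have "\<dots> = qpoch_inf (q^2) (q^2) ^ 2 / (qpoch_inf q q * qpoch_inf (q^p) (q^p))"
    using gauss[OF q0 r] by (simp add: divide_inverse mult.assoc)
  finally show ?thesis using C unfolding tm by simp
qed

lemma bn_nz: "bn p n \<noteq> 0 \<Longrightarrow> \<exists>i\<le>n. i \<in> range tri \<and> p dvd (n - i)"
proof (rule ccontr)
  assume nz: "bn p n \<noteq> 0" and no: "\<not> (\<exists>i\<le>n. i \<in> range tri \<and> p dvd (n - i))"
  have "bn p n = 0" unfolding bn_def
    by (rule sum.neutral) (use no in auto)
  with nz show False by simp
qed

lemma bn_pos: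
  assumes "m \<le> n" "m \<in> range tri" "p dvd (n - m)"
  shows "1 \<le> bn p n"
proof -
  have "1 \<le> pc ((n - m) div p)" by (rule pc_pos)
  also have "pc ((n - m) div p) = (if m \<in> range tri then 1 else 0) * (if p dvd (n - m) then pc ((n - m) div p) else 0)"
    using assms by simp
  also have "\<dots> \<le> bn p n" unfolding bn_def
    by (rule member_le_sum[of m "{..n}" "\<lambda>i. (if i \<in> range tri then 1 else 0) * (if p dvd (n - i) then pc ((n - i) div p) else 0)"])
       (use assms in auto)
  finally show ?thesis .
qed

lemma tri_mod:
  assumes cop: "coprime 2 p"
  shows "[tri (s mod p) = tri s] (mod p)"
proof -
  have "[s mod p * (s mod p + 1) = s * (s + 1)] (mod p)"
    by (intro cong_mult cong_add) (simp_all add: cong_def)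
  then have "[2 * tri (s mod p) = 2 * tri s] (mod p)" by (simp only: tri2)
  then show ?thesis using cong_mult_lcancel_nat[OF cop] by blast
qed

lemma int_tri_eq: "int (tri s) = int s * (int s + 1) div 2"
  unfolding tri_def by (simp add: zdiv_int algebra_simps)

lemma int_tri: "\<exists>s. r * (r + 1) div 2 = int (tri s)" for r :: int
proof (cases "0 \<le> r")
  case True
  then have "r * (r + 1) div 2 = int (tri (nat r))" by (simp add: int_tri_eq)
  then show ?thesis by blast
next
  case False
  then have e: "int (nat (- r - 1)) = - r - 1" by simp
  have "r * (r + 1) = (- r - 1) * (- r - 1 + 1)" by (simp add: algebra_simps)
  then have "r * (r + 1) div 2 = int (tri (nat (- r - 1)))" unfolding int_tri_eq e by simp
  then show ?thesis by blast
qed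

theorem theorem1p3:
  fixes p :: nat and a :: "nat \<Rightarrow> complex"
  assumes "prime p" and "p \<ge> 3"
    and "\<And>q. norm q < 1 \<Longrightarrow>
           (\<lambda>n. a n * q ^ n) sums
             (qpoch_inf (q^2) (q^2) ^ 2 / (qpoch_inf q q * qpoch_inf (q^p) (q^p)))"
  shows "\<forall>n. int n > bigN p \<longrightarrow>
           (if (\<exists>r::int. [int n = r * (r + 1) div 2] (mod int p))
            then a n \<in> \<real> \<and> Re (a n) > 0
            else a n = 0)"
proof -
  have p0: "0 < p" using assms(2) by simp
  have cop: "coprime 2 p" using prime_odd_nat[OF assms(1)] assms(2) by simp
  have a_eq: "a n = of_nat (bn p n)" for n
  proof (rule powser_uniq[where a = a and b = "\<lambda>n. of_nat (bn p n)" and f = "\<lambda>q. qpoch_inf (q^2) (q^2) ^ 2 / (qpoch_inf q q * qpoch_inf (q^p) (q^p))"])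
    fix x :: complex assume "x \<noteq> 0" "norm x < 1"
    then show "(\<lambda>n. a n * x ^ n) sums (qpoch_inf (x^2) (x^2) ^ 2 / (qpoch_inf x x * qpoch_inf (x^p) (x^p)))"
      using assms(3) by blast
  next
    fix x :: complex assume "x \<noteq> 0" "norm x < 1"
    then show "(\<lambda>n. of_nat (bn p n) * x ^ n) sums (qpoch_inf (x^2) (x^2) ^ 2 / (qpoch_inf x x * qpoch_inf (x^p) (x^p)))"
      by (intro series[OF p0])
  qed
  show ?thesis
  proof (intro allI impI)
    fix n assume nN: "bigN p < int n"
    show "if (\<exists>r::int. [int n = r * (r + 1) div 2] (mod int p))
            then a n \<in> \<real> \<and> Re (a n) > 0 else a n = 0"
    proof (cases "\<exists>r::int. [int n = r * (r + 1) div 2] (mod int p)")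
      case True
      then obtain r :: int where r: "[int n = r * (r + 1) div 2] (mod int p)" by blast
      obtain s where s: "r * (r + 1) div 2 = int (tri s)" using int_tri by blast
      have c1: "[n = tri s] (mod p)" using r unfolding s cong_int_iff .
      define r0 where "r0 = s mod p"
      have r0le: "r0 \<le> p - 1" using p0 unfolding r0_def
        by (metis Suc_pred' less_Suc_eq_le mod_less_divisor)
      have c2: "[tri r0 = n] (mod p)"
        using tri_mod[OF cop, of s] c1 unfolding r0_def by (metis cong_sym cong_trans)
      define s0 where "s0 = n mod p"
      have s0le: "s0 \<le> p - 1" using p0 unfolding s0_def
        by (metis Suc_pred' less_Suc_eq_le mod_less_divisor)
      have inS: "tri r0 \<in> tri_res p s0"
        unfolding tri_res_def s0_def using r0le c2 by auto
      have finS: "finite (tri_res p s0)"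
      proof (rule finite_subset)
        show "tri_res p s0 \<subseteq> tri ` {..p - 1}" unfolding tri_res_def by auto
      qed simp
      define m0 where "m0 = Min (tri_res p s0)"
      have "m0 \<in> tri_res p s0" unfolding m0_def using finS inS by (intro Min_in) auto
      then obtain r1 where m0: "m0 = tri r1" and cr1: "[tri r1 = s0] (mod p)"
        unfolding tri_res_def by blast
      define BS where "BS = {Min (tri_res p s) | s. s \<le> p - 1 \<and> tri_res p s \<noteq> {}}"
      have finBS: "finite BS"
      proof (rule finite_subset)
        show "BS \<subseteq> (\<lambda>s. Min (tri_res p s)) ` {..p - 1}" unfolding BS_def by auto
      qed simp
      have "m0 \<in> BS" unfolding BS_def m0_def using s0le inS by blast
      then have "m0 \<le> Max BS" using finBS by simp
      moreover have "int (Max BS) - int p < int n" using nN unfolding bigN_def BS_def .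
      ultimately have lt: "m0 < n + p" by linarith
      have cm: "[m0 = n] (mod p)" using cr1 unfolding m0 s0_def by simp
      have le: "m0 \<le> n"
      proof (rule ccontr)
        assume "\<not> m0 \<le> n"
        then have "n \<le> m0" "0 < m0 - n" by auto
        then have "p dvd (m0 - n)" using cm cong_altdef_nat by blast
        moreover have "m0 - n < p" using lt \<open>n \<le> m0\<close> by (simp add: less_diff_conv2 add.commute)
        ultimately show False using \<open>0 < m0 - n\<close> by (simp add: nat_dvd_not_less)
      qed
      then have "p dvd (n - m0)" using cm cong_altdef_nat cong_sym by blast
      then have "1 \<le> bn p n" using le m0 by (intro bn_pos) auto
      then show ?thesis using True a_eq[of n] by simp
    next
      case False
      have "bn p n = 0"
      proof (rule ccontr)
        assume "bn p n \<noteq> 0"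
        then obtain i where i: "i \<le> n" "i \<in> range tri" "p dvd (n - i)" using bn_nz by blast
        then obtain s where si: "i = tri s" by blast
        have "[n = i] (mod p)" using i cong_altdef_nat by blast
        then have "[int n = int (tri s)] (mod int p)" unfolding si cong_int_iff .
        then have "[int n = int s * (int s + 1) div 2] (mod int p)" unfolding int_tri_eq .
        with False show False by blast
      qed
      then show ?thesis using False a_eq[of n] by simp
    qed
  qed
qed

end
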